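(* Let $(X,\mathscr{A},\mu)$ be a $\sigma$-finite measure space and $\phi$ a nonsingular transformation of $X$ such that $0<\mathsf{h}_\phi<\infty$ a.e. $[\mu]$. Suppose $P\colon X\times\mathfrak{B}(\mathbb{R}_+)\to[0,1]$ is an $\mathscr{A}$-measurable family of probability measures satisfying $\mathsf{E}(P(\cdot,\sigma))(x)=\dfrac{\int_\sigma t\,P(\phi(x),\mathrm{d}t)}{\mathsf{h}_\phi(\phi(x))}$ for $\mu$-a.e. $x\in X$, for every $\sigma\in\mathfrak{B}(\mathbb{R}_+)$. Let $n\in\mathbb{N}$ be such that $\mathsf{h}_{\phi^n}<\infty$ a.e. $[\mu]$. Then for every $j=1,\dots,n$: $0<\mathsf{h}_{\phi^j}<\infty$ a.e. $[\mu]$, and $\mathsf{E}_j(P_j(\cdot,\sigma))(x)=\dfrac{\int_\sigma t\,P_j(\phi^j(x),\mathrm{d}t)}{\mathsf{h}_{\phi^j}(\phi^j(x))}$ for $\mu$-a.e. $x\in X$, for every $\sigma\in\mathfrak{B}(\mathbb{R}_+)$, where $P_j\colon X\times\mathfrak{B}(\mathbb{R}_+)\to[0,1]$ is the $\mathscr{A}$-measurable family of probability measures $P_j(x,\sigma)=P(x,\eta_j^{-1}(\sigma))$ with $\eta_j\colon\mathbb{R}_+\ni t\mapsto t^j\in\mathbb{R}_+$, and $\mathsf{E}_j$ denotes conditional expectation with respect to $(\phi^j)^{-1}(\mathscr{A})$.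
   Context: $\mathbb{N}=\{1,2,\dots\}$, $\mathbb{R}_+=[0,\infty)$. Conventions: $0\cdot\infty=0$, $1/0=\infty$, $0/0=1$. Nonsingular: $\phi^{-1}(\Delta)\in\mathscr{A}$ for $\Delta\in\mathscr{A}$ and $\mu(\phi^{-1}(\Delta))=0$ when $\mu(\Delta)=0$. $\phi^j$ is the $j$-fold composition, $\mathsf{h}_{\phi^j}$ the Radon–Nikodym derivative of $\mu\circ(\phi^j)^{-1}$ w.r.t. $\mu$. For a nonsingular $\psi$ with $\mathsf{h}_\psi<\infty$ a.e., the conditional expectation w.r.t. $\psi^{-1}(\mathscr{A})$ of an $\mathscr{A}$-measurable $f\ge0$ is the a.e. unique $\psi^{-1}(\mathscr{A})$-measurable function $\mathsf{E}^\psi(f)$ with $\int(g\circ\psi)f\,\mathrm{d}\mu=\int(g\circ\psi)\mathsf{E}^\psi(f)\,\mathrm{d}\mu$ for all $\mathscr{A}$-measurable $g\ge0$; $\mathsf{E}=\mathsf{E}^\phi$, $\mathsf{E}_j=\mathsf{E}^{\phi^j}$. $\mathscr{A}$-measurable family of probability measures: each $P(x,\cdot)$ a Borel probability measure on $\mathbb{R}_+$, each $P(\cdot,\sigma)$ $\mathscr{A}$-measurable. *)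

theory Defs
  imports "HOL-Probability.Probability"
begin

text \<open>Division on [0,\<infinity>] with the paper's conventions 1/0 = \<infinity>, 0/0 = 1.\<close>
definition ediv :: "ennreal \<Rightarrow> ennreal \<Rightarrow> ennreal" where
  "ediv a b = (if b = 0 then (if a = 0 then 1 else \<infinity>) else a / b)"

definition nonsingular :: "'a measure \<Rightarrow> ('a \<Rightarrow> 'a) \<Rightarrow> bool" where
  "nonsingular M \<phi> \<longleftrightarrow> \<phi> \<in> M \<rightarrow>\<^sub>M M \<and>
     (\<forall>A\<in>sets M. emeasure M A = 0 \<longrightarrow> emeasure M (\<phi> -` A \<inter> space M) = 0)"

definition hder :: "'a measure \<Rightarrow> ('a \<Rightarrow> 'a) \<Rightarrow> 'a \<Rightarrow> ennreal" where
  "hder M \<psi> = RN_deriv M (distr M M \<psi>)"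

definition is_cond_exp :: "'a measure \<Rightarrow> ('a \<Rightarrow> 'a) \<Rightarrow> ('a \<Rightarrow> ennreal) \<Rightarrow> ('a \<Rightarrow> ennreal) \<Rightarrow> bool" where
  "is_cond_exp M \<psi> f g \<longleftrightarrow> g \<in> borel_measurable (vimage_algebra (space M) \<psi> M) \<and>
     (\<forall>h \<in> borel_measurable M.
        (\<integral>\<^sup>+ x. h (\<psi> x) * f x \<partial>M) = (\<integral>\<^sup>+ x. h (\<psi> x) * g x \<partial>M))"

definition cond_exp :: "'a measure \<Rightarrow> ('a \<Rightarrow> 'a) \<Rightarrow> ('a \<Rightarrow> ennreal) \<Rightarrow> 'a \<Rightarrow> ennreal" where
  "cond_exp M \<psi> f = (SOME g. is_cond_exp M \<psi> f g)"

abbreviation Rplus :: "real measure" where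
  "Rplus \<equiv> restrict_space borel {0..}"

definition meas_prob_family :: "'a measure \<Rightarrow> ('a \<Rightarrow> real measure) \<Rightarrow> bool" where
  "meas_prob_family M P \<longleftrightarrow>
     (\<forall>x\<in>space M. prob_space (P x) \<and> sets (P x) = sets Rplus) \<and>
     (\<forall>\<sigma>\<in>sets Rplus. (\<lambda>x. emeasure (P x) \<sigma>) \<in> borel_measurable M)"

definition Pj :: "('a \<Rightarrow> real measure) \<Rightarrow> nat \<Rightarrow> 'a \<Rightarrow> real measure" where
  "Pj P j x = distr (P x) Rplus (\<lambda>t. t ^ j)"

end

theory Submission
  imports Defs
begin

lemma funpow_measurable: "f \<in> M \<rightarrow>\<^sub>M M \<Longrightarrow> (f ^^ j) \<in> M \<rightarrow>\<^sub>M M"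
  by (induction j) (auto intro: measurable_comp)

lemma measurable_ediv[measurable]:
  assumes [measurable]: "f \<in> borel_measurable M" "g \<in> borel_measurable M"
  shows "(\<lambda>x. ediv (f x) (g x)) \<in> borel_measurable M"
  unfolding ediv_def by measurable

lemma meas_Pi: "\<psi> \<in> M \<rightarrow>\<^sub>M M \<Longrightarrow> \<psi> \<in> space M \<rightarrow> space M"
  by (simp add: measurable_def)

lemma subalg_vimage:
  assumes "\<psi> \<in> M \<rightarrow>\<^sub>M M"
  shows "subalgebra M (vimage_algebra (space M) \<psi> M)"
  unfolding subalgebra_def
proof
  have psi: "\<psi> \<in> space M \<rightarrow> space M" using assms by (simp add: measurable_def)
  show "space (vimage_algebra (space M) \<psi> M) = space M" by simp
  show "sets (vimage_algebra (space M) \<psi> M) \<subseteq> sets M"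
  proof
    fix A assume "A \<in> sets (vimage_algebra (space M) \<psi> M)"
    then obtain B where B: "B \<in> sets M" "A = \<psi> -` B \<inter> space M"
      unfolding sets_vimage_algebra2[OF psi] by auto
    show "A \<in> sets M" unfolding B(2) by (rule measurable_sets[OF assms B(1)])
  qed
qed

lemma sf_sub:
  assumes sf: "sigma_finite_measure M" and psi[measurable]: "\<psi> \<in> M \<rightarrow>\<^sub>M M"
    and k[measurable]: "k \<in> borel_measurable M" and dk: "density M k = distr M M \<psi>"
    and fin: "AE x in M. k x \<noteq> \<infinity>"
  shows "sigma_finite_subalgebra M (vimage_algebra (space M) \<psi> M)"
proof -
  let ?F = "vimage_algebra (space M) \<psi> M"
  have sub: "subalgebra M ?F" by (rule subalg_vimage[OF psi])
  have sfd: "sigma_finite_measure (distr M M \<psi>)"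
    using sigma_finite_measure.sigma_finite_iff_density_finite[OF sf k] fin dk by simp
  have "\<exists>A. countable A \<and> A \<subseteq> sets (distr M M \<psi>) \<and> \<Union>A = space (distr M M \<psi>) \<and> (\<forall>a\<in>A. emeasure (distr M M \<psi>) a \<noteq> \<infinity>)"
    by (rule sigma_finite_measure.sigma_finite_countable[OF sfd])
  then obtain A where A: "countable A" "A \<subseteq> sets M" "\<Union>A = space M" "\<forall>a\<in>A. emeasure (distr M M \<psi>) a \<noteq> \<infinity>"
    by (metis sets_distr space_distr)
  let ?B = "(\<lambda>a. \<psi> -` a \<inter> space M) ` A"
  have sB: "?B \<subseteq> sets ?F"
  proof
    fix b assume "b \<in> ?B"
    then obtain a where a: "a \<in> A" "b = \<psi> -` a \<inter> space M" by blast
    have "a \<in> sets M" using a(1) A(2) by blast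
    then show "b \<in> sets ?F" unfolding a(2) by (rule in_vimage_algebra)
  qed
  have uB: "\<Union> ?B = space M"
  proof
    show "\<Union> ?B \<subseteq> space M" by blast
    show "space M \<subseteq> \<Union> ?B"
    proof
      fix x assume x: "x \<in> space M"
      then have "\<psi> x \<in> space M" using meas_Pi[OF psi] by blast
      then obtain a where "a \<in> A" "\<psi> x \<in> a" using A(3) by blast
      then show "x \<in> \<Union> ?B" using x by blast
    qed
  qed
  have "sigma_finite_measure (restr_to_subalg M ?F)"
  proof
    show "\<exists>B. countable B \<and> B \<subseteq> sets (restr_to_subalg M ?F) \<and> \<Union> B = space (restr_to_subalg M ?F) \<and>
       (\<forall>a\<in>B. emeasure (restr_to_subalg M ?F) a \<noteq> \<infinity>)"
    proof (intro exI conjI)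
      show "countable ?B" using A(1) by simp
      show "?B \<subseteq> sets (restr_to_subalg M ?F)"
        using sB by (simp add: sets_restr_to_subalg[OF sub])
      show "\<Union> ?B = space (restr_to_subalg M ?F)"
        using uB by (simp add: space_restr_to_subalg)
      show "\<forall>a\<in>?B. emeasure (restr_to_subalg M ?F) a \<noteq> \<infinity>"
      proof
        fix b assume b: "b \<in> ?B"
        then obtain a where a: "a \<in> A" "b = \<psi> -` a \<inter> space M" by blast
        have aM: "a \<in> sets M" using a(1) A(2) by blast
        have "emeasure (restr_to_subalg M ?F) b = emeasure M b"
          using b sB by (intro emeasure_restr_to_subalg[OF sub]) blast
        also have "\<dots> = emeasure (distr M M \<psi>) a" unfolding a(2) by (rule emeasure_distr[OF psi aM, symmetric])
        finally show "emeasure (restr_to_subalg M ?F) b \<noteq> \<infinity>" using a(1) A(4) by simp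
      qed
    qed
  qed
  then show ?thesis using sub by (simp add: sigma_finite_subalgebra_def)
qed

lemma hcomp_meas:
  assumes "\<psi> \<in> M \<rightarrow>\<^sub>M M" "h \<in> borel_measurable M"
  shows "(\<lambda>x. h (\<psi> x)) \<in> borel_measurable (vimage_algebra (space M) \<psi> M)"
  using measurable_compose[OF measurable_vimage_algebra1[OF meas_Pi[OF assms(1)]] assms(2)] by simp

lemma cond_exp_is:
  assumes sfs: "sigma_finite_subalgebra M (vimage_algebra (space M) \<psi> M)"
    and psi: "\<psi> \<in> M \<rightarrow>\<^sub>M M" and f: "f \<in> borel_measurable M"
  shows "is_cond_exp M \<psi> f (cond_exp M \<psi> f)"
proof -
  interpret sigma_finite_subalgebra M "vimage_algebra (space M) \<psi> M" by (rule sfs)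
  have "is_cond_exp M \<psi> f (nn_cond_exp M (vimage_algebra (space M) \<psi> M) f)"
    unfolding is_cond_exp_def
    using nn_cond_exp_intg[OF hcomp_meas[OF psi] f] by auto
  then show ?thesis unfolding cond_exp_def by (rule someI[of "is_cond_exp M \<psi> f"])
qed

lemma cond_exp_unique:
  assumes sfs: "sigma_finite_subalgebra M (vimage_algebra (space M) \<psi> M)"
    and psi: "\<psi> \<in> M \<rightarrow>\<^sub>M M" and f: "f \<in> borel_measurable M"
    and g: "is_cond_exp M \<psi> f g"
  shows "AE x in M. cond_exp M \<psi> f x = g x"
proof -
  interpret sigma_finite_subalgebra M "vimage_algebra (space M) \<psi> M" by (rule sfs)
  have *: "AE x in M. g x = nn_cond_exp M (vimage_algebra (space M) \<psi> M) f x"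
    if g: "is_cond_exp M \<psi> f g" for g
  proof (rule nn_cond_exp_charact[OF _ f])
    show "g \<in> borel_measurable (vimage_algebra (space M) \<psi> M)" using g by (simp add: is_cond_exp_def)
    fix A assume "A \<in> sets (vimage_algebra (space M) \<psi> M)"
    then obtain B where B: "B \<in> sets M" "A = \<psi> -` B \<inter> space M"
      using sets_vimage_algebra2[OF meas_Pi[OF psi]] by auto
    have "(\<integral>\<^sup>+ x. indicator B (\<psi> x) * f x \<partial>M) = (\<integral>\<^sup>+ x. indicator B (\<psi> x) * g x \<partial>M)"
      using g B by (simp add: is_cond_exp_def)
    moreover have "\<And>u. (\<integral>\<^sup>+ x \<in> A. u x \<partial>M) = (\<integral>\<^sup>+ x. indicator B (\<psi> x) * u x \<partial>M)"
      using B by (intro nn_integral_cong) (auto simp: indicator_def)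
    ultimately show "(\<integral>\<^sup>+ x \<in> A. f x \<partial>M) = (\<integral>\<^sup>+ x \<in> A. g x \<partial>M)" by simp
  qed
  show ?thesis using *[OF g] *[OF cond_exp_is[OF sfs psi f]] by auto
qed

lemma ediv_cancel: "0 < b \<Longrightarrow> b < \<infinity> \<Longrightarrow> b * ediv a b = a"
proof -
  assume b: "0 < b" "b < \<infinity>"
  then have "b \<noteq> 0" "b \<noteq> top" by auto
  then have "b * a / b = a" by (metis mult.commute ennreal_mult_divide_eq)
  then show ?thesis using b unfolding ediv_def by (simp add: ennreal_times_divide)
qed

locale setting =
  fixes M :: "'a measure" and \<phi> :: "'a \<Rightarrow> 'a" and P :: "'a \<Rightarrow> real measure"
  assumes sf: "sigma_finite_measure M" and ns: "nonsingular M \<phi>"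
   and hpos: "AE x in M. 0 < hder M \<phi> x \<and> hder M \<phi> x < \<infinity>"
   and mpf: "meas_prob_family M P"
   and H: "\<forall>\<sigma>\<in>sets Rplus. AE x in M. cond_exp M \<phi> (\<lambda>y. emeasure (P y) \<sigma>) x
             = ediv (\<integral>\<^sup>+ t\<in>\<sigma>. ennreal t \<partial>P (\<phi> x)) (hder M \<phi> (\<phi> x))"
begin

lemma Rplus_id[measurable]: "(\<lambda>t::real. t) \<in> borel_measurable Rplus"
  by (rule measurable_restrict_space1) simp

lemma phi_meas[measurable]: "\<phi> \<in> M \<rightarrow>\<^sub>M M"
  using ns by (simp add: nonsingular_def)

lemma h_meas[measurable]: "hder M \<phi> \<in> borel_measurable M"
  unfolding hder_def by simp

lemma dens_h: "density M (hder M \<phi>) = distr M M \<phi>"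
  unfolding hder_def
proof (rule sigma_finite_measure.density_RN_deriv[OF sf])
  show "absolutely_continuous M (distr M M \<phi>)"
    unfolding absolutely_continuous_def
  proof
    fix A assume "A \<in> null_sets M"
    then show "A \<in> null_sets (distr M M \<phi>)"
      using ns by (auto simp: nonsingular_def null_sets_def emeasure_distr)
  qed
qed simp

lemma P_sets: "x \<in> space M \<Longrightarrow> sets (P x) = sets Rplus"
  using mpf by (simp add: meas_prob_family_def)

lemma P_space: "x \<in> space M \<Longrightarrow> space (P x) = {0..}"
  using sets_eq_imp_space_eq[OF P_sets] by simp

lemma P_prob: "x \<in> space M \<Longrightarrow> prob_space (P x)"
  using mpf by (simp add: meas_prob_family_def)

lemma K[measurable]: "P \<in> M \<rightarrow>\<^sub>M subprob_algebra Rplus"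
  by (rule measurable_subprob_algebra)
     (use mpf in \<open>auto simp: meas_prob_family_def prob_space_imp_subprob_space\<close>)

lemma int_meas[measurable]:
  assumes [measurable]: "v \<in> borel_measurable Rplus"
  shows "(\<lambda>y. \<integral>\<^sup>+t. v t \<partial>P y) \<in> borel_measurable M"
  using measurable_compose[OF K nn_integral_measurable_subprob_algebra[OF assms]] .

lemma E:
  assumes g[measurable]: "g \<in> borel_measurable M" and s: "\<sigma> \<in> sets Rplus"
  shows "(\<integral>\<^sup>+x. g (\<phi> x) * emeasure (P x) \<sigma> \<partial>M) = (\<integral>\<^sup>+y. g y * (\<integral>\<^sup>+t\<in>\<sigma>. ennreal t \<partial>P y) \<partial>M)"
proof -
  let ?I = "\<lambda>y. \<integral>\<^sup>+t\<in>\<sigma>. ennreal t \<partial>P y"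
  have ms[measurable]: "\<sigma> \<in> sets Rplus" by (rule s)
  have Im[measurable]: "?I \<in> borel_measurable M"
    by (intro int_meas) measurable
  have sm[measurable]: "(\<lambda>y. emeasure (P y) \<sigma>) \<in> borel_measurable M"
    using mpf s by (simp add: meas_prob_family_def)
  have sfs: "sigma_finite_subalgebra M (vimage_algebra (space M) \<phi> M)"
    by (rule sf_sub[OF sf phi_meas h_meas dens_h]) (use hpos in auto)
  have ce: "is_cond_exp M \<phi> (\<lambda>y. emeasure (P y) \<sigma>) (cond_exp M \<phi> (\<lambda>y. emeasure (P y) \<sigma>))"
    by (rule cond_exp_is[OF sfs phi_meas sm])
  have "(\<integral>\<^sup>+x. g (\<phi> x) * emeasure (P x) \<sigma> \<partial>M)
      = (\<integral>\<^sup>+x. g (\<phi> x) * cond_exp M \<phi> (\<lambda>y. emeasure (P y) \<sigma>) x \<partial>M)"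
    using ce g by (simp add: is_cond_exp_def)
  also have "\<dots> = (\<integral>\<^sup>+x. g (\<phi> x) * ediv (?I (\<phi> x)) (hder M \<phi> (\<phi> x)) \<partial>M)"
  proof -
    have ae: "AE x in M. cond_exp M \<phi> (\<lambda>y. emeasure (P y) \<sigma>) x = ediv (?I (\<phi> x)) (hder M \<phi> (\<phi> x))"
      using H s by blast
    show ?thesis
    proof (rule nn_integral_cong_AE)
      show "AE x in M. g (\<phi> x) * cond_exp M \<phi> (\<lambda>y. emeasure (P y) \<sigma>) x = g (\<phi> x) * ediv (?I (\<phi> x)) (hder M \<phi> (\<phi> x))"
        using ae by eventually_elim simp
    qed
  qed
  also have "\<dots> = (\<integral>\<^sup>+y. g y * ediv (?I y) (hder M \<phi> y) \<partial>distr M M \<phi>)"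
    by (rule nn_integral_distr[symmetric]) auto
  also have "\<dots> = (\<integral>\<^sup>+y. hder M \<phi> y * (g y * ediv (?I y) (hder M \<phi> y)) \<partial>M)"
    unfolding dens_h[symmetric] by (rule nn_integral_density) auto
  also have "\<dots> = (\<integral>\<^sup>+y. g y * ?I y \<partial>M)"
  proof (rule nn_integral_cong_AE)
    show "AE y in M. hder M \<phi> y * (g y * ediv (?I y) (hder M \<phi> y)) = g y * ?I y"
      using hpos
    proof eventually_elim
      case (elim y)
      then have "hder M \<phi> y * ediv (?I y) (hder M \<phi> y) = ?I y"
        by (intro ediv_cancel) auto
      then show ?case by (metis mult.left_commute)
    qed
  qed
  finally show ?thesis .
qed

end

context setting begin

lemma K_dens[measurable]: "P \<in> density M f \<rightarrow>\<^sub>M subprob_algebra Rplus"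
  using K by (simp add: measurable_cong_sets[OF sets_density refl])

lemma E':
  assumes g[measurable]: "g \<in> borel_measurable M" and v[measurable]: "v \<in> borel_measurable Rplus"
  shows "(\<integral>\<^sup>+x. g (\<phi> x) * (\<integral>\<^sup>+t. v t \<partial>P x) \<partial>M) = (\<integral>\<^sup>+y. g y * (\<integral>\<^sup>+t. ennreal t * v t \<partial>P y) \<partial>M)"
proof (cases "space M = {}")
  case True then show ?thesis by (simp add: nn_integral_empty)
next
  case ne: False
  define Q1 where "Q1 = bind (density M (\<lambda>x. g (\<phi> x))) P"
  define Q2 where "Q2 = bind (density M g) P"
  have sQ1: "sets Q1 = sets Rplus" unfolding Q1_def using ne
    by (subst sets_bind[where N=Rplus]) (auto simp: P_sets)
  have sQ2: "sets Q2 = sets Rplus" unfolding Q2_def using ne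
    by (subst sets_bind[where N=Rplus]) (auto simp: P_sets)
  have eq: "Q1 = density Q2 (\<lambda>t. ennreal t)"
  proof (rule measure_eqI)
    show "sets Q1 = sets (density Q2 (\<lambda>t. ennreal t))" using sQ1 sQ2 by simp
    fix \<sigma> assume "\<sigma> \<in> sets Q1"
    then have s[measurable]: "\<sigma> \<in> sets Rplus" using sQ1 by simp
    have "emeasure Q1 \<sigma> = (\<integral>\<^sup>+x. emeasure (P x) \<sigma> \<partial>density M (\<lambda>x. g (\<phi> x)))"
      unfolding Q1_def using ne by (intro emeasure_bind[where N=Rplus]) auto
    also have "\<dots> = (\<integral>\<^sup>+x. g (\<phi> x) * emeasure (P x) \<sigma> \<partial>M)"
      using mpf s by (intro nn_integral_density) (auto simp: meas_prob_family_def)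
    also have "\<dots> = (\<integral>\<^sup>+y. g y * (\<integral>\<^sup>+t\<in>\<sigma>. ennreal t \<partial>P y) \<partial>M)"
      by (rule E[OF g s])
    also have "\<dots> = (\<integral>\<^sup>+y. (\<integral>\<^sup>+t\<in>\<sigma>. ennreal t \<partial>P y) \<partial>density M g)"
      by (rule nn_integral_density[symmetric]) auto
    also have "\<dots> = (\<integral>\<^sup>+t\<in>\<sigma>. ennreal t \<partial>Q2)"
      unfolding Q2_def by (rule nn_integral_bind[where B=Rplus, symmetric]) auto
    also have "\<dots> = emeasure (density Q2 (\<lambda>t. ennreal t)) \<sigma>"
      using sQ2 by (subst emeasure_density) (auto simp: measurable_cong_sets[OF sQ2 refl])
    finally show "emeasure Q1 \<sigma> = emeasure (density Q2 (\<lambda>t. ennreal t)) \<sigma>" .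
  qed
  have "(\<integral>\<^sup>+x. g (\<phi> x) * (\<integral>\<^sup>+t. v t \<partial>P x) \<partial>M) = (\<integral>\<^sup>+x. (\<integral>\<^sup>+t. v t \<partial>P x) \<partial>density M (\<lambda>x. g (\<phi> x)))"
    by (rule nn_integral_density[symmetric]) auto
  also have "\<dots> = (\<integral>\<^sup>+t. v t \<partial>Q1)"
    unfolding Q1_def by (rule nn_integral_bind[where B=Rplus, symmetric]) auto
  also have "\<dots> = (\<integral>\<^sup>+t. ennreal t * v t \<partial>Q2)"
    unfolding eq using sQ2 by (subst nn_integral_density) (auto simp: measurable_cong_sets[OF sQ2 refl])
  also have "\<dots> = (\<integral>\<^sup>+y. (\<integral>\<^sup>+t. ennreal t * v t \<partial>P y) \<partial>density M g)"
    unfolding Q2_def by (rule nn_integral_bind[where B=Rplus]) auto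
  also have "\<dots> = (\<integral>\<^sup>+y. g y * (\<integral>\<^sup>+t. ennreal t * v t \<partial>P y) \<partial>M)"
    by (rule nn_integral_density) auto
  finally show ?thesis .
qed

lemma S:
  assumes "g \<in> borel_measurable M" and "v \<in> borel_measurable Rplus"
  shows "(\<integral>\<^sup>+x. g ((\<phi> ^^ j) x) * (\<integral>\<^sup>+t. v t \<partial>P x) \<partial>M) = (\<integral>\<^sup>+y. g y * (\<integral>\<^sup>+t. ennreal (t ^ j) * v t \<partial>P y) \<partial>M)"
  using assms
proof (induction j arbitrary: g v)
  case 0
  then show ?case by simp
next
  case (Suc j)
  note [measurable] = Suc.prems
  have "(\<integral>\<^sup>+x. g ((\<phi> ^^ Suc j) x) * (\<integral>\<^sup>+t. v t \<partial>P x) \<partial>M)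
      = (\<integral>\<^sup>+x. (\<lambda>y. g (\<phi> y)) ((\<phi> ^^ j) x) * (\<integral>\<^sup>+t. v t \<partial>P x) \<partial>M)" by simp
  also have "\<dots> = (\<integral>\<^sup>+y. g (\<phi> y) * (\<integral>\<^sup>+t. ennreal (t ^ j) * v t \<partial>P y) \<partial>M)"
    by (rule Suc.IH) auto
  also have "\<dots> = (\<integral>\<^sup>+y. g y * (\<integral>\<^sup>+t. ennreal t * (ennreal (t ^ j) * v t) \<partial>P y) \<partial>M)"
    by (rule E') auto
  also have "\<dots> = (\<integral>\<^sup>+y. g y * (\<integral>\<^sup>+t. ennreal (t ^ Suc j) * v t \<partial>P y) \<partial>M)"
  proof (rule nn_integral_cong)
    fix y assume y: "y \<in> space M"
    have "(\<integral>\<^sup>+t. ennreal t * (ennreal (t ^ j) * v t) \<partial>P y) = (\<integral>\<^sup>+t. ennreal (t ^ Suc j) * v t \<partial>P y)"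
      by (rule nn_integral_cong) (auto simp: P_space[OF y] ennreal_mult' mult.assoc)
    then show "g y * (\<integral>\<^sup>+t. ennreal t * (ennreal (t ^ j) * v t) \<partial>P y) = g y * (\<integral>\<^sup>+t. ennreal (t ^ Suc j) * v t \<partial>P y)" by simp
  qed
  finally show ?case .
qed

end

context setting begin

definition mom :: "nat \<Rightarrow> 'a \<Rightarrow> ennreal" where
  "mom i y = (\<integral>\<^sup>+t. ennreal (t ^ i) \<partial>P y)"

lemma pow_Rplus[measurable]: "(\<lambda>t::real. ennreal (t ^ i)) \<in> borel_measurable Rplus"
  by measurable

lemma mom_meas[measurable]: "mom i \<in> borel_measurable M"
  unfolding mom_def by (rule int_meas) measurable

lemma psi_meas[measurable]: "(\<phi> ^^ i) \<in> M \<rightarrow>\<^sub>M M"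
  by (rule funpow_measurable[OF phi_meas])

lemma one_int: "x \<in> space M \<Longrightarrow> (\<integral>\<^sup>+t. 1 \<partial>P x) = 1"
  using prob_space.emeasure_space_1[OF P_prob] by simp

lemma dens_mom: "density M (mom i) = distr M M (\<phi> ^^ i)"
proof (rule measure_eqI)
  show "sets (density M (mom i)) = sets (distr M M (\<phi> ^^ i))" by simp
  fix B assume "B \<in> sets (density M (mom i))"
  then have B[measurable]: "B \<in> sets M" by simp
  have "emeasure (density M (mom i)) B = (\<integral>\<^sup>+y. mom i y * indicator B y \<partial>M)"
    by (rule emeasure_density) auto
  also have "\<dots> = (\<integral>\<^sup>+y. indicator B y * (\<integral>\<^sup>+t. ennreal (t ^ i) * 1 \<partial>P y) \<partial>M)"
    unfolding mom_def by (simp add: mult.commute)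
  also have "\<dots> = (\<integral>\<^sup>+x. indicator B ((\<phi> ^^ i) x) * (\<integral>\<^sup>+t. 1 \<partial>P x) \<partial>M)"
    by (rule S[symmetric]) auto
  also have "\<dots> = (\<integral>\<^sup>+x. indicator ((\<phi> ^^ i) -` B \<inter> space M) x \<partial>M)"
    by (rule nn_integral_cong) (simp add: indicator_def prob_space.emeasure_space_1[OF P_prob])
  also have "\<dots> = emeasure (distr M M (\<phi> ^^ i)) B"
    by (subst emeasure_distr) auto
  finally show "emeasure (density M (mom i)) B = emeasure (distr M M (\<phi> ^^ i)) B" .
qed

lemma hder_mom: "AE y in M. mom i y = hder M (\<phi> ^^ i) y"
  unfolding hder_def by (rule sigma_finite_measure.RN_deriv_unique[OF sf mom_meas dens_mom])

lemma mom_le: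
  assumes y: "y \<in> space M" and ij: "i \<le> n"
  shows "mom i y \<le> 1 + mom n y"
proof -
  have "mom i y \<le> (\<integral>\<^sup>+t. (1 + ennreal (t ^ n)) \<partial>P y)"
    unfolding mom_def
  proof (rule nn_integral_mono)
    fix t assume "t \<in> space (P y)"
    then have t: "0 \<le> t" using P_space[OF y] by simp
    have "t ^ i \<le> 1 + t ^ n"
    proof (cases "t \<le> 1")
      case True
      then have "t ^ i \<le> 1" using t by (simp add: power_le_one)
      moreover have "0 \<le> t ^ n" using t by simp
      ultimately show ?thesis by linarith
    next
      case False
      then have "t ^ i \<le> t ^ n" using ij by (intro power_increasing) auto
      then show ?thesis by simp
    qed
    then have "ennreal (t ^ i) \<le> ennreal (1 + t ^ n)" by (rule ennreal_leI)
    also have "\<dots> = 1 + ennreal (t ^ n)" using t by (simp add: ennreal_plus)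
    finally show "ennreal (t ^ i) \<le> 1 + ennreal (t ^ n)" .
  qed
  also have "\<dots> = (\<integral>\<^sup>+t. 1 \<partial>P y) + mom n y"
    unfolding mom_def
    by (rule nn_integral_add) (auto simp: measurable_cong_sets[OF P_sets[OF y] refl])
  also have "\<dots> = 1 + mom n y" using one_int[OF y] by simp
  finally show ?thesis .
qed

lemma mom_pos:
  assumes y: "y \<in> space M" and i: "1 \<le> i" and p: "0 < mom 1 y"
  shows "0 < mom i y"
proof (rule ccontr)
  assume "\<not> 0 < mom i y"
  then have "mom i y = 0" by simp
  then have "AE t in P y. ennreal (t ^ i) = 0"
    unfolding mom_def
    by (subst nn_integral_0_iff_AE[symmetric]) (auto simp: measurable_cong_sets[OF P_sets[OF y] refl])
  then have "AE t in P y. ennreal t = 0"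
  proof (rule AE_mp[OF _ AE_I2[where M="P y"]], intro impI)
    fix t assume "t \<in> space (P y)" and e: "ennreal (t ^ i) = 0"
    then have t: "0 \<le> t" using P_space[OF y] by simp
    have "t ^ i \<le> 0" using e by (simp only: ennreal_eq_0_iff)
    moreover have "0 \<le> t ^ i" using t by simp
    ultimately have "t ^ i = 0" by simp
    then have "t = 0" using i by simp
    then show "ennreal t = 0" by simp
  qed
  then have "mom 1 y = 0"
    unfolding mom_def
    by (subst nn_integral_0_iff_AE) (auto simp: measurable_cong_sets[OF P_sets[OF y] refl])
  then show False using p by simp
qed

end

context setting begin

lemma eta_meas[measurable]: "(\<lambda>t::real. t ^ j) \<in> Rplus \<rightarrow>\<^sub>M Rplus"
  by (rule measurable_restrict_space3) auto

lemma eta_meas_P: "y \<in> space M \<Longrightarrow> (\<lambda>t::real. t ^ j) \<in> P y \<rightarrow>\<^sub>M Rplus"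
  using eta_meas by (simp add: measurable_cong_sets[OF P_sets refl])

lemma final:
  assumes j: "1 \<le> j" "j \<le> n" and fin: "AE x in M. hder M (\<phi> ^^ n) x < \<infinity>"
  shows "(AE x in M. 0 < hder M (\<phi> ^^ j) x \<and> hder M (\<phi> ^^ j) x < \<infinity>) \<and>
           (\<forall>\<sigma>\<in>sets Rplus. AE x in M.
              cond_exp M (\<phi> ^^ j) (\<lambda>y. emeasure (Pj P j y) \<sigma>) x
                = ediv (\<integral>\<^sup>+ t\<in>\<sigma>. ennreal t \<partial>Pj P j ((\<phi> ^^ j) x)) (hder M (\<phi> ^^ j) ((\<phi> ^^ j) x)))"
proof -
  have m1: "AE y in M. mom 1 y = hder M \<phi> y" using hder_mom[of 1] by simp
  have mfin: "AE y in M. mom n y < \<infinity>" using fin hder_mom[of n] by eventually_elim simp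
  have mj: "AE y in M. 0 < mom j y \<and> mom j y < \<infinity>"
    using m1 mfin hpos hder_mom[of j] AE_space
  proof eventually_elim
    case (elim y)
    then have y: "y \<in> space M" by simp
    have "0 < mom j y" using mom_pos[OF y j(1)] elim by simp
    moreover have "mom j y \<le> 1 + mom n y" by (rule mom_le[OF y j(2)])
    moreover have "1 + mom n y < \<infinity>" using elim by (simp add: ennreal_add_less_top)
    ultimately show ?case using le_less_trans by blast
  qed
  have part1: "AE x in M. 0 < hder M (\<phi> ^^ j) x \<and> hder M (\<phi> ^^ j) x < \<infinity>"
    using mj hder_mom[of j] by eventually_elim simp
  have sfs: "sigma_finite_subalgebra M (vimage_algebra (space M) (\<phi> ^^ j) M)"
    by (rule sf_sub[OF sf psi_meas mom_meas dens_mom]) (use mj in auto)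
  have part2: "AE x in M.
              cond_exp M (\<phi> ^^ j) (\<lambda>y. emeasure (Pj P j y) \<sigma>) x
                = ediv (\<integral>\<^sup>+ t\<in>\<sigma>. ennreal t \<partial>Pj P j ((\<phi> ^^ j) x)) (hder M (\<phi> ^^ j) ((\<phi> ^^ j) x))"
    if s[measurable]: "\<sigma> \<in> sets Rplus" for \<sigma>
  proof -
    let ?S = "(\<lambda>t::real. t ^ j) -` \<sigma> \<inter> space Rplus"
    have Sm[measurable]: "?S \<in> sets Rplus" by (rule measurable_sets[OF eta_meas s])
    let ?f = "\<lambda>y. emeasure (Pj P j y) \<sigma>"
    let ?I = "\<lambda>y. \<integral>\<^sup>+ t\<in>\<sigma>. ennreal t \<partial>Pj P j y"
    let ?G = "\<lambda>y. ediv (?I y) (hder M (\<phi> ^^ j) y)"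
    have em: "?f y = (\<integral>\<^sup>+t. indicator ?S t \<partial>P y)" if y: "y \<in> space M" for y
    proof -
      have "?f y = emeasure (P y) ((\<lambda>t::real. t ^ j) -` \<sigma> \<inter> space (P y))"
        unfolding Pj_def by (rule emeasure_distr[OF eta_meas_P[OF y] s])
      also have "\<dots> = emeasure (P y) ?S" using P_space[OF y] by simp
      also have "\<dots> = (\<integral>\<^sup>+t. indicator ?S t \<partial>P y)"
        using Sm P_sets[OF y] by simp
      finally show ?thesis .
    qed
    have J: "?I y = (\<integral>\<^sup>+t. ennreal (t ^ j) * indicator ?S t \<partial>P y)" if y: "y \<in> space M" for y
    proof -
      have "?I y = (\<integral>\<^sup>+t. ennreal (t ^ j) * indicator \<sigma> (t ^ j) \<partial>P y)"
        unfolding Pj_def by (rule nn_integral_distr[OF eta_meas_P[OF y]]) measurable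
      also have "\<dots> = (\<integral>\<^sup>+t. ennreal (t ^ j) * indicator ?S t \<partial>P y)"
        by (rule nn_integral_cong) (simp add: P_space[OF y] indicator_def)
      finally show ?thesis .
    qed
    have fm[measurable]: "?f \<in> borel_measurable M"
    proof (rule measurable_cong[THEN iffD2])
      show "\<And>y. y \<in> space M \<Longrightarrow> ?f y = (\<integral>\<^sup>+t. indicator ?S t \<partial>P y)" using em by simp
      show "(\<lambda>y. \<integral>\<^sup>+t. indicator ?S t \<partial>P y) \<in> borel_measurable M" by (rule int_meas) measurable
    qed
    have Im[measurable]: "?I \<in> borel_measurable M"
    proof (rule measurable_cong[THEN iffD2])
      show "\<And>y. y \<in> space M \<Longrightarrow> ?I y = (\<integral>\<^sup>+t. ennreal (t ^ j) * indicator ?S t \<partial>P y)" using J by simp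
      show "(\<lambda>y. \<integral>\<^sup>+t. ennreal (t ^ j) * indicator ?S t \<partial>P y) \<in> borel_measurable M" by (rule int_meas) measurable
    qed
    have hj[measurable]: "hder M (\<phi> ^^ j) \<in> borel_measurable M" unfolding hder_def by simp
    have Gm[measurable]: "?G \<in> borel_measurable M" by measurable
    have ce: "is_cond_exp M (\<phi> ^^ j) ?f (\<lambda>x. ?G ((\<phi> ^^ j) x))"
      unfolding is_cond_exp_def
    proof (intro conjI ballI)
      show "(\<lambda>x. ?G ((\<phi> ^^ j) x)) \<in> borel_measurable (vimage_algebra (space M) (\<phi> ^^ j) M)"
        by (rule hcomp_meas[OF psi_meas Gm])
      fix h :: "'a \<Rightarrow> ennreal" assume h[measurable]: "h \<in> borel_measurable M"
      have "(\<integral>\<^sup>+x. h ((\<phi> ^^ j) x) * ?f x \<partial>M) = (\<integral>\<^sup>+x. h ((\<phi> ^^ j) x) * (\<integral>\<^sup>+t. indicator ?S t \<partial>P x) \<partial>M)"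
        by (rule nn_integral_cong) (simp add: em)
      also have "\<dots> = (\<integral>\<^sup>+y. h y * (\<integral>\<^sup>+t. ennreal (t ^ j) * indicator ?S t \<partial>P y) \<partial>M)"
        by (rule S[of h "indicator ?S" j]) measurable
      also have "\<dots> = (\<integral>\<^sup>+y. h y * ?I y \<partial>M)"
        by (rule nn_integral_cong) (simp add: J)
      also have "\<dots> = (\<integral>\<^sup>+y. mom j y * (h y * ?G y) \<partial>M)"
      proof (rule nn_integral_cong_AE)
        show "AE y in M. h y * ?I y = mom j y * (h y * ?G y)"
          using mj hder_mom[of j]
        proof eventually_elim
          case (elim y)
          have G: "?G y = ediv (?I y) (mom j y)" using elim by simp
          have c: "mom j y * ediv (?I y) (mom j y) = ?I y" by (intro ediv_cancel) (use elim in auto)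
          have "mom j y * (h y * ediv (?I y) (mom j y)) = h y * (mom j y * ediv (?I y) (mom j y))"
            by (rule mult.left_commute)
          then show ?case unfolding G c by simp
        qed
      qed
      also have "\<dots> = (\<integral>\<^sup>+y. h y * ?G y \<partial>distr M M (\<phi> ^^ j))"
        unfolding dens_mom[symmetric] by (rule nn_integral_density[symmetric]) auto
      also have "\<dots> = (\<integral>\<^sup>+x. h ((\<phi> ^^ j) x) * ?G ((\<phi> ^^ j) x) \<partial>M)"
        by (rule nn_integral_distr) auto
      finally show "(\<integral>\<^sup>+x. h ((\<phi> ^^ j) x) * ?f x \<partial>M) = (\<integral>\<^sup>+x. h ((\<phi> ^^ j) x) * ?G ((\<phi> ^^ j) x) \<partial>M)" .
    qed
    show ?thesis by (rule cond_exp_unique[OF sfs psi_meas fm ce])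
  qed
  show ?thesis using part1 part2 by blast
qed

end

theorem proposition23:
  fixes M :: "'a measure" and \<phi> :: "'a \<Rightarrow> 'a" and P :: "'a \<Rightarrow> real measure" and n :: nat
  assumes "sigma_finite_measure M"
    and "nonsingular M \<phi>"
    and "AE x in M. 0 < hder M \<phi> x \<and> hder M \<phi> x < \<infinity>"
    and "meas_prob_family M P"
    and "\<forall>\<sigma>\<in>sets Rplus. AE x in M.
           cond_exp M \<phi> (\<lambda>y. emeasure (P y) \<sigma>) x
             = ediv (\<integral>\<^sup>+ t\<in>\<sigma>. ennreal t \<partial>P (\<phi> x)) (hder M \<phi> (\<phi> x))"
    and "n \<ge> 1"
    and "AE x in M. hder M (\<phi> ^^ n) x < \<infinity>"
  shows "\<forall>j\<in>{1..n}.
           (AE x in M. 0 < hder M (\<phi> ^^ j) x \<and> hder M (\<phi> ^^ j) x < \<infinity>) \<and>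
           (\<forall>\<sigma>\<in>sets Rplus. AE x in M.
              cond_exp M (\<phi> ^^ j) (\<lambda>y. emeasure (Pj P j y) \<sigma>) x
                = ediv (\<integral>\<^sup>+ t\<in>\<sigma>. ennreal t \<partial>Pj P j ((\<phi> ^^ j) x)) (hder M (\<phi> ^^ j) ((\<phi> ^^ j) x)))"
proof
  interpret setting M \<phi> P by (rule setting.intro[OF assms(1-5)])
  fix j assume "j \<in> {1..n}"
  then have j1: "1 \<le> j" and j2: "j \<le> n" by auto
  show "(AE x in M. 0 < hder M (\<phi> ^^ j) x \<and> hder M (\<phi> ^^ j) x < \<infinity>) \<and>
           (\<forall>\<sigma>\<in>sets Rplus. AE x in M.
              cond_exp M (\<phi> ^^ j) (\<lambda>y. emeasure (Pj P j y) \<sigma>) x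
                = ediv (\<integral>\<^sup>+ t\<in>\<sigma>. ennreal t \<partial>Pj P j ((\<phi> ^^ j) x)) (hder M (\<phi> ^^ j) ((\<phi> ^^ j) x)))"
    by (rule final[OF j1 j2 assms(7)])
qed

end
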